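(* For every session type $T$ (in the syntax described in the context), the set of bottom-up subterms of $T$ satisfies $|\mathrm{Sub}_{BU}(T)| \leq |T|$, where $|\mathrm{Sub}_{BU}(T)|$ is the cardinality of this set and $|T|$ is the size of $T$.
   Context: Session types (possibly containing free variables) are given by the grammar $T ::= \mathsf{end} \mid X \mid \mu X.T \mid {?}[T_1,\dots,T_n].S \mid {!}[T_1,\dots,T_n].S \mid \&\langle l_1:T_1,\dots,l_n:T_n\rangle \mid \oplus\langle l_1:T_1,\dots,l_n:T_n\rangle$ (input, output, branch, select), where $X$ ranges over type variables and $l_i$ over labels. Types are identified up to $\alpha$-conversion of bound variables, and all substitutions $T[Q/X]$ are capture-avoiding. The size $|T|$ is the number of constructors (nodes) of $T$: $|\mathsf{end}| = |X| = 1$, $|\mu X.T| = 1 + |T|$, $|\&\langle l_i:T_i\rangle_{1\le i\le n}| = |\oplus\langle l_i:T_i\rangle_{1\le i\le n}| = 1 + \sum_{i=1}^n |T_i|$, and $|{?}[T_1,\dots,T_n].S| = |{!}[T_1,\dots,T_n].S| = 1 + \sum_{i=1}^n|T_i| + |S|$. The set of bottom-up subterms $\mathrm{Sub}_{BU}(T)$ is defined by recursion on $T$: $\mathrm{Sub}_{BU}(\mathsf{end}) = \{\mathsf{end}\}$; $\mathrm{Sub}_{BU}(X) = \{X\}$; $\mathrm{Sub}_{BU}(\mu X.T') = \{\mu X.T'\} \cup \{S[\mu X.T'/X] \mid S \in \mathrm{Sub}_{BU}(T')\}$; $\mathrm{Sub}_{BU}(\&\langle l_i:T_i\rangle_{i})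 = \{\&\langle l_i:T_i\rangle_i\} \cup \bigcup_i \mathrm{Sub}_{BU}(T_i)$, and likewise for $\oplus$; $\mathrm{Sub}_{BU}({?}[T_1,\dots,T_n].S) = \{{?}[T_1,\dots,T_n].S\} \cup \bigcup_i \mathrm{Sub}_{BU}(T_i) \cup \mathrm{Sub}_{BU}(S)$, and likewise for ${!}$. *)

theory Defs
  imports Main
begin

text \<open>Session types up to alpha-conversion, represented with de Bruijn indices:
  Var i refers to the i-th enclosing Mu binder (free if i exceeds the binder depth).\<close>

datatype 'l stype =
    End
  | Var nat
  | Mu "'l stype"
  | In "'l stype list" "'l stype"
  | Out "'l stype list" "'l stype"
  | Branch "('l \<times> 'l stype) list"
  | Select "('l \<times> 'l stype) list"

fun lift :: "nat \<Rightarrow> 'l stype \<Rightarrow> 'l stype" where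
  "lift k End = End"
| "lift k (Var i) = (if i < k then Var i else Var (Suc i))"
| "lift k (Mu t) = Mu (lift (Suc k) t)"
| "lift k (In ts s) = In (map (lift k) ts) (lift k s)"
| "lift k (Out ts s) = Out (map (lift k) ts) (lift k s)"
| "lift k (Branch ls) = Branch (map (\<lambda>p. (fst p, lift k (snd p))) ls)"
| "lift k (Select ls) = Select (map (\<lambda>p. (fst p, lift k (snd p))) ls)"

text \<open>Capture-avoiding substitution: subst k u t replaces the variable with index k
  (the variable bound by the removed binder) by u, and decrements indices above k.\<close>
fun subst :: "nat \<Rightarrow> 'l stype \<Rightarrow> 'l stype \<Rightarrow> 'l stype" where
  "subst k u End = End"
| "subst k u (Var i) = (if i < k then Var i else if i = k then u else Var (i - 1))"
| "subst k u (Mu t) = Mu (subst (Suc k) (lift 0 u) t)"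
| "subst k u (In ts s) = In (map (subst k u) ts) (subst k u s)"
| "subst k u (Out ts s) = Out (map (subst k u) ts) (subst k u s)"
| "subst k u (Branch ls) = Branch (map (\<lambda>p. (fst p, subst k u (snd p))) ls)"
| "subst k u (Select ls) = Select (map (\<lambda>p. (fst p, subst k u (snd p))) ls)"

fun tsize :: "'l stype \<Rightarrow> nat" where
  "tsize End = 1"
| "tsize (Var i) = 1"
| "tsize (Mu t) = 1 + tsize t"
| "tsize (In ts s) = 1 + sum_list (map tsize ts) + tsize s"
| "tsize (Out ts s) = 1 + sum_list (map tsize ts) + tsize s"
| "tsize (Branch ls) = 1 + sum_list (map (\<lambda>p. tsize (snd p)) ls)"
| "tsize (Select ls) = 1 + sum_list (map (\<lambda>p. tsize (snd p)) ls)"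

fun subBU :: "'l stype \<Rightarrow> 'l stype set" where
  "subBU End = {End}"
| "subBU (Var i) = {Var i}"
| "subBU (Mu t) = insert (Mu t) ((\<lambda>S. subst 0 (Mu t) S) ` subBU t)"
| "subBU (In ts s) = insert (In ts s) ((\<Union>t\<in>set ts. subBU t) \<union> subBU s)"
| "subBU (Out ts s) = insert (Out ts s) ((\<Union>t\<in>set ts. subBU t) \<union> subBU s)"
| "subBU (Branch ls) = insert (Branch ls) (\<Union>p\<in>set ls. subBU (snd p))"
| "subBU (Select ls) = insert (Select ls) (\<Union>p\<in>set ls. subBU (snd p))"

end

theory Submission
  imports Defs
begin

lemma card_UN_list:
  assumes "\<And>t. t \<in> set ts \<Longrightarrow> finite (f t)"
  shows "finite (\<Union>t\<in>set ts. f t) \<and> card (\<Union>t\<in>set ts. f t) \<le> sum_list (map (\<lambda>t. card (f t)) ts)"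
  using assms
proof (induction ts)
  case Nil
  then show ?case by simp
next
  case (Cons a ts)
  have "card (\<Union>t\<in>set (a # ts). f t) \<le> card (f a) + card (\<Union>t\<in>set ts. f t)"
    by (simp add: card_Un_le)
  then show ?case using Cons by auto
qed

lemma sum_list_mono_le:
  assumes "\<And>t. t \<in> set ts \<Longrightarrow> (f t :: nat) \<le> g t"
  shows "sum_list (map f ts) \<le> sum_list (map g ts)"
  using assms by (induction ts) (auto intro: add_mono)

lemma main_aux:
  fixes T :: "'l stype"
  shows "finite (subBU T) \<and> card (subBU T) \<le> tsize T"
proof (induction T rule: subBU.induct)
  case (1)
  then show ?case by simp
next
  case (2 i)
  then show ?case by simp
next
  case (3 t)
  have "card ((\<lambda>S. subst 0 (Mu t) S) ` subBU t) \<le> card (subBU t)"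
    by (rule card_image_le) (use 3 in simp)
  then show ?case using 3 by (simp add: card_insert_if)
next
  case (4 ts s)
  have U: "finite (\<Union>t\<in>set ts. subBU t) \<and> card (\<Union>t\<in>set ts. subBU t) \<le> sum_list (map (\<lambda>t. card (subBU t)) ts)"
    by (rule card_UN_list) (use 4 in blast)
  have M: "sum_list (map (\<lambda>t. card (subBU t)) ts) \<le> sum_list (map tsize ts)"
    by (rule sum_list_mono_le) (use 4 in blast)
  have "card (subBU (In ts s)) \<le> Suc (card ((\<Union>t\<in>set ts. subBU t) \<union> subBU s))"
    by (simp add: card_insert_le_m1 card_insert_if)
  also have "\<dots> \<le> Suc (card (\<Union>t\<in>set ts. subBU t) + card (subBU s))"
    using card_Un_le by (metis Suc_le_mono)
  finally show ?case using U M 4 by simp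
next
  case (5 ts s)
  have U: "finite (\<Union>t\<in>set ts. subBU t) \<and> card (\<Union>t\<in>set ts. subBU t) \<le> sum_list (map (\<lambda>t. card (subBU t)) ts)"
    by (rule card_UN_list) (use 5 in blast)
  have M: "sum_list (map (\<lambda>t. card (subBU t)) ts) \<le> sum_list (map tsize ts)"
    by (rule sum_list_mono_le) (use 5 in blast)
  have "card (subBU (Out ts s)) \<le> Suc (card ((\<Union>t\<in>set ts. subBU t) \<union> subBU s))"
    by (simp add: card_insert_le_m1 card_insert_if)
  also have "\<dots> \<le> Suc (card (\<Union>t\<in>set ts. subBU t) + card (subBU s))"
    using card_Un_le by (metis Suc_le_mono)
  finally show ?case using U M 5 by simp
next
  case (6 ls)
  have U: "finite (\<Union>p\<in>set ls. subBU (snd p)) \<and> card (\<Union>p\<in>set ls. subBU (snd p)) \<le> sum_list (map (\<lambda>p. card (subBU (snd p))) ls)"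
    by (rule card_UN_list) (use 6 in auto)
  have M: "sum_list (map (\<lambda>p. card (subBU (snd p))) ls) \<le> sum_list (map (\<lambda>p. tsize (snd p)) ls)"
    by (rule sum_list_mono_le) (use 6 in auto)
  have "card (subBU (Branch ls)) \<le> Suc (card (\<Union>p\<in>set ls. subBU (snd p)))"
    using U by (simp add: card_insert_if)
  then show ?case using U M by simp
next
  case (7 ls)
  have U: "finite (\<Union>p\<in>set ls. subBU (snd p)) \<and> card (\<Union>p\<in>set ls. subBU (snd p)) \<le> sum_list (map (\<lambda>p. card (subBU (snd p))) ls)"
    by (rule card_UN_list) (use 7 in auto)
  have M: "sum_list (map (\<lambda>p. card (subBU (snd p))) ls) \<le> sum_list (map (\<lambda>p. tsize (snd p)) ls)"
    by (rule sum_list_mono_le) (use 7 in auto)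
  have "card (subBU (Select ls)) \<le> Suc (card (\<Union>p\<in>set ls. subBU (snd p)))"
    using U by (simp add: card_insert_if)
  then show ?case using U M by simp
qed

theorem mainTheorem1:
  fixes T :: "'l stype"
  shows "card (subBU T) \<le> tsize T"
  using main_aux by blast

end
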